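(* (1) $s_3=U(S_2-S_{1,1})\in\mathcal{E}(\mathcal{P}^{s+}_{3,5})$. (2) If $f\in\mathcal{P}^{s+}_{3,5}$ satisfies $f(0,x,1)=0$ for all $x\ge0$, $f_a(0,0,1)=0$ and $f(1,1,1)=0$, then $f=\lambda s_3$ for some $\lambda\ge0$.
   Context: Let $a,b,c$ be variables. For nonnegative integers $m,n$ put $S_{m,n}=a^mb^n+b^mc^n+c^ma^n$, $S_n=S_{n,0}=a^n+b^n+c^n$, $T_{m,n}=S_{m,n}+S_{n,m}$, $U=abc$ (so $S_{1,1}=ab+bc+ca$). Let $\mathcal{H}^s_{3,5}$ be the real vector space of symmetric homogeneous polynomials of degree 5 in $\mathbb{R}[a,b,c]$; it has basis $s_0=S_5-US_{1,1}$, $s_1=T_{4,1}-2US_{1,1}$, $s_2=T_{3,2}-2US_{1,1}$, $s_3=US_2-US_{1,1}$, $s_4=US_{1,1}$. Let $\mathcal{P}^{s+}_{3,5}=\{f\in\mathcal{H}^s_{3,5}: f(a,b,c)\ge 0\text{ for all }a,b,c\ge0\}$. For a closed convex cone $\mathcal{P}$, an element $f\in\mathcal{P}\setminus\{0\}$ is extremal if whenever $f=g+h$ with $g,h\in\mathcal{P}$ we have $g,h\in\mathbb{R}_{\ge0}f$; $\mathcal{E}(\mathcal{P})$ is the set of extremal elements. $f_a=\partial f/\partial a$. *)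

theory Defs
  imports "HOL-Analysis.Analysis"
begin

text \<open>Polynomials in a,b,c are represented by their (real) polynomial functions
  real \<Rightarrow> real \<Rightarrow> real \<Rightarrow> real.\<close>

type_synonym poly3 = "real \<Rightarrow> real \<Rightarrow> real \<Rightarrow> real"

definition Smn :: "nat \<Rightarrow> nat \<Rightarrow> poly3" where
  "Smn m n = (\<lambda>a b c. a^m * b^n + b^m * c^n + c^m * a^n)"

definition Sn :: "nat \<Rightarrow> poly3" where
  "Sn n = Smn n 0"

definition Tmn :: "nat \<Rightarrow> nat \<Rightarrow> poly3" where
  "Tmn m n = (\<lambda>a b c. Smn m n a b c + Smn n m a b c)"

definition U :: poly3 where
  "U = (\<lambda>a b c. a * b * c)"

definition s0 :: poly3 where "s0 = (\<lambda>a b c. Sn 5 a b c - U a b c * Smn 1 1 a b c)"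
definition s1 :: poly3 where "s1 = (\<lambda>a b c. Tmn 4 1 a b c - 2 * U a b c * Smn 1 1 a b c)"
definition s2 :: poly3 where "s2 = (\<lambda>a b c. Tmn 3 2 a b c - 2 * U a b c * Smn 1 1 a b c)"
definition s3 :: poly3 where "s3 = (\<lambda>a b c. U a b c * Sn 2 a b c - U a b c * Smn 1 1 a b c)"
definition s4 :: poly3 where "s4 = (\<lambda>a b c. U a b c * Smn 1 1 a b c)"

text \<open>The space of symmetric homogeneous quintics, as the real span of its basis s0..s4.\<close>
definition H35 :: "poly3 set" where
  "H35 = {f. \<exists>c0 c1 c2 c3 c4 :: real.
            f = (\<lambda>a b c. c0 * s0 a b c + c1 * s1 a b c + c2 * s2 a b c
                          + c3 * s3 a b c + c4 * s4 a b c)}"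

definition P35 :: "poly3 set" where
  "P35 = {f \<in> H35. \<forall>a b c. a \<ge> 0 \<longrightarrow> b \<ge> 0 \<longrightarrow> c \<ge> 0 \<longrightarrow> f a b c \<ge> 0}"

definition extremal :: "poly3 set \<Rightarrow> poly3 set" where
  "extremal P = {f \<in> P. f \<noteq> (\<lambda>a b c. 0) \<and>
     (\<forall>g h. g \<in> P \<longrightarrow> h \<in> P \<longrightarrow> f = (\<lambda>a b c. g a b c + h a b c) \<longrightarrow>
        (\<exists>\<mu>::real. \<mu> \<ge> 0 \<and> g = (\<lambda>a b c. \<mu> * f a b c)) \<and>
        (\<exists>\<nu>::real. \<nu> \<ge> 0 \<and> h = (\<lambda>a b c. \<nu> * f a b c)))}"

end

theory Submission
  imports Defs
begin

lemma s_eval: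
  "s0 0 x 1 = x^5 + 1" "s1 0 x 1 = x^4 + x" "s2 0 x 1 = x^3 + x^2"
  "s3 0 x 1 = 0" "s4 0 x 1 = 0"
  "s0 1 1 1 = 0" "s1 1 1 1 = 0" "s2 1 1 1 = 0" "s3 1 1 1 = 0" "s4 1 1 1 = 3"
  "s0 1 1 2 = 24" "s1 1 1 2 = 18" "s2 1 1 2 = 6" "s3 1 1 2 = 2" "s4 1 1 2 = 10"
  by (simp_all add: s0_def s1_def s2_def s3_def s4_def Sn_def Smn_def Tmn_def U_def)

lemma s3_nonneg:
  assumes "a \<ge> 0" "b \<ge> 0" "c \<ge> 0" shows "s3 a b c \<ge> (0::real)"
proof -
  have "s3 a b c = (a*b*c) * (((a-b)^2 + (b-c)^2 + (c-a)^2)/2)"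
    by (simp add: s3_def Sn_def Smn_def U_def power2_eq_square algebra_simps)
  moreover have "a*b*c \<ge> 0" using assms by simp
  moreover have "((a-b)^2 + (b-c)^2 + (c-a)^2)/2 \<ge> 0" by simp
  ultimately show ?thesis by (metis mult_nonneg_nonneg)
qed

lemma s3_P35: "s3 \<in> P35"
proof -
  have "s3 = (\<lambda>a b c. 0 * s0 a b c + 0 * s1 a b c + 0 * s2 a b c + 1 * s3 a b c + 0 * s4 a b c)"
    by simp
  hence "s3 \<in> H35" unfolding H35_def by blast
  thus ?thesis unfolding P35_def using s3_nonneg by blast
qed

lemma key:
  assumes f: "f \<in> P35" and z: "\<forall>x\<ge>0. f 0 x 1 = 0" and o: "f 1 1 1 = 0"
  shows "\<exists>lam::real. lam \<ge> 0 \<and> f = (\<lambda>a b c. lam * s3 a b c)"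
proof -
  from f obtain c0 c1 c2 c3 c4 where fd: "f = (\<lambda>a b c. c0 * s0 a b c + c1 * s1 a b c + c2 * s2 a b c
                          + c3 * s3 a b c + c4 * s4 a b c)"
    and nn: "\<forall>a b c. a \<ge> 0 \<longrightarrow> b \<ge> 0 \<longrightarrow> c \<ge> 0 \<longrightarrow> f a b c \<ge> 0"
    unfolding P35_def H35_def by blast
  have e0: "f 0 0 1 = 0" "f 0 1 1 = 0" "f 0 2 1 = 0" using z by auto
  hence "c0 = 0" "c0*2 + c1*2 + c2*2 = 0" "c0*33 + c1*18 + c2*12 = 0"
    by (simp_all add: fd s_eval)
  hence c: "c0 = 0" "c1 = 0" "c2 = 0" by linarith+
  have "c4 = 0" using o by (simp add: fd s_eval c)
  have "f 1 1 2 \<ge> 0" using nn by simp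
  hence "c3 \<ge> 0" by (simp add: fd s_eval c \<open>c4 = 0\<close>)
  moreover have "f = (\<lambda>a b c. c3 * s3 a b c)" by (simp add: fd c \<open>c4 = 0\<close>)
  ultimately show ?thesis by blast
qed

theorem theorem4p6:
  shows "s3 \<in> extremal P35 \<and>
         (\<forall>f. f \<in> P35 \<longrightarrow> (\<forall>x\<ge>0. f 0 x 1 = 0) \<longrightarrow>
              deriv (\<lambda>t. f t 0 1) 0 = 0 \<longrightarrow> f 1 1 1 = 0 \<longrightarrow>
              (\<exists>lam::real. lam \<ge> 0 \<and> f = (\<lambda>a b c. lam * s3 a b c)))"
proof
  show "s3 \<in> extremal P35"
    unfolding extremal_def
  proof (intro CollectI conjI allI impI)
    show "s3 \<in> P35" by (rule s3_P35)
    show "s3 \<noteq> (\<lambda>a b c. 0)"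
    proof
      assume "s3 = (\<lambda>a b c. 0)"
      hence "s3 1 1 2 = 0" by metis
      thus False by (simp add: s_eval)
    qed
    fix g h assume g: "g \<in> P35" and h: "h \<in> P35" and sd: "s3 = (\<lambda>a b c. g a b c + h a b c)"
    have gn: "\<And>a b c. a \<ge> 0 \<Longrightarrow> b \<ge> 0 \<Longrightarrow> c \<ge> 0 \<Longrightarrow> g a b c \<ge> 0"
      using g unfolding P35_def by blast
    have hn: "\<And>a b c. a \<ge> 0 \<Longrightarrow> b \<ge> 0 \<Longrightarrow> c \<ge> 0 \<Longrightarrow> h a b c \<ge> 0"
      using h unfolding P35_def by blast
    have sp: "\<And>a b c. s3 a b c = g a b c + h a b c" using sd by metis
    have zg: "\<forall>x\<ge>0. g 0 x 1 = 0 \<and> h 0 x 1 = 0"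
    proof (intro allI impI)
      fix x :: real assume "x \<ge> 0"
      have "g 0 x 1 + h 0 x 1 = 0" using sp[of 0 x 1] by (simp add: s_eval)
      moreover have "g 0 x 1 \<ge> 0" "h 0 x 1 \<ge> 0" using gn hn \<open>x \<ge> 0\<close> by auto
      ultimately show "g 0 x 1 = 0 \<and> h 0 x 1 = 0" by linarith
    qed
    have "g 1 1 1 + h 1 1 1 = 0" using sp[of 1 1 1] by (simp add: s_eval)
    moreover have "g 1 1 1 \<ge> 0" "h 1 1 1 \<ge> 0" using gn hn by auto
    ultimately have o: "g 1 1 1 = 0" "h 1 1 1 = 0" by linarith+
    show "\<exists>\<mu>::real. \<mu> \<ge> 0 \<and> g = (\<lambda>a b c. \<mu> * s3 a b c)"
      using key[OF g _ o(1)] zg by blast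
    show "\<exists>\<nu>::real. \<nu> \<ge> 0 \<and> h = (\<lambda>a b c. \<nu> * s3 a b c)"
      using key[OF h _ o(2)] zg by blast
  qed
  show "\<forall>f. f \<in> P35 \<longrightarrow> (\<forall>x\<ge>0. f 0 x 1 = 0) \<longrightarrow>
              deriv (\<lambda>t. f t 0 1) 0 = 0 \<longrightarrow> f 1 1 1 = 0 \<longrightarrow>
              (\<exists>lam::real. lam \<ge> 0 \<and> f = (\<lambda>a b c. lam * s3 a b c))"
    using key by blast
qed

end
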